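(* Let $A, M, F \in \mathbb{C}^{n\times n}$ with $M$ and $F$ nonsingular, and let $I$ be the $n\times n$ identity matrix. Define the $2n\times 2n$ matrix \[ Q := \begin{bmatrix} 0 & I - M^{-1}A \\ I - F^{-1}A & 0 \end{bmatrix}. \] If $\rho(|Q|) < 1$, then \[ \rho\left(\left| I - F^{-1}(M + F - A) M^{-1} A \right|\right) < 1. \]
   Context: For a matrix $\mathcal A$, $|\mathcal A|$ denotes the entrywise absolute value (modulus) and $\rho(\mathcal A)$ denotes its spectral radius. *)

theory Defs
  imports "Jordan_Normal_Form.Spectral_Radius"
begin

text \<open>Entrywise modulus of a complex matrix, viewed again as a complex matrix
  (with nonnegative real entries), so that the spectral radius applies.\<close>
definition abs_mat :: "complex mat \<Rightarrow> complex mat" where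
  "abs_mat A = map_mat (\<lambda>x. complex_of_real (cmod x)) A"

end

theory Submission imports Defs begin

definition dommat :: "complex mat \<Rightarrow> complex mat \<Rightarrow> bool" where
  "dommat X Z \<longleftrightarrow> dim_row X = dim_row Z \<and> dim_col X = dim_col Z \<and>
    (\<forall>i<dim_row X. \<forall>j<dim_col X. Im (Z$$(i,j)) = 0 \<and> cmod (X$$(i,j)) \<le> Re (Z$$(i,j)))"

lemma dommat_mult:
  assumes d1: "dommat X Z" and d2: "dommat X' Z'" and dc: "dim_col X = dim_row X'"
  shows "dommat (X * X') (Z * Z')"
proof -
  have main: "Im ((Z*Z')$$(i,j)) = 0 \<and> cmod ((X*X')$$(i,j)) \<le> Re ((Z*Z')$$(i,j))"
    if i: "i < dim_row X" and j: "j < dim_col X'" for i j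
  proof -
    let ?m = "dim_col X"
    have zz: "(Z*Z')$$(i,j) = (\<Sum>k<?m. Z$$(i,k) * Z'$$(k,j))"
      using d1 d2 dc i j unfolding dommat_def
      by (simp add: scalar_prod_def atLeast0LessThan)
    have xx: "(X*X')$$(i,j) = (\<Sum>k<?m. X$$(i,k) * X'$$(k,j))"
      using d1 d2 dc i j unfolding dommat_def
      by (simp add: scalar_prod_def atLeast0LessThan)
    have im: "\<And>k. k < ?m \<Longrightarrow> Im (Z$$(i,k)) = 0 \<and> Im (Z'$$(k,j)) = 0"
      using d1 d2 dc i j unfolding dommat_def by auto
    have le: "\<And>k. k < ?m \<Longrightarrow> cmod (X$$(i,k)) \<le> Re (Z$$(i,k)) \<and> cmod (X'$$(k,j)) \<le> Re (Z'$$(k,j))"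
      using d1 d2 dc i j unfolding dommat_def by auto
    have "Im ((Z*Z')$$(i,j)) = (\<Sum>k<?m. Im (Z$$(i,k) * Z'$$(k,j)))" unfolding zz by (simp add: Im_sum)
    also have "\<dots> = 0" using im by (intro sum.neutral) auto
    finally have 1: "Im ((Z*Z')$$(i,j)) = 0" .
    have "cmod ((X*X')$$(i,j)) \<le> (\<Sum>k<?m. cmod (X$$(i,k) * X'$$(k,j)))" unfolding xx by (rule norm_sum)
    also have "\<dots> \<le> (\<Sum>k<?m. Re (Z$$(i,k) * Z'$$(k,j)))"
    proof (intro sum_mono)
      fix k assume "k \<in> {..<?m}"
      then have k: "k < ?m" by auto
      have "cmod (X$$(i,k) * X'$$(k,j)) = cmod (X$$(i,k)) * cmod (X'$$(k,j))" by (simp add: norm_mult)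
      also have "\<dots> \<le> Re (Z$$(i,k)) * Re (Z'$$(k,j))"
        using le[OF k] by (intro mult_mono) (auto intro: order_trans[OF norm_ge_zero])
      also have "\<dots> = Re (Z$$(i,k) * Z'$$(k,j))" using im[OF k] by simp
      finally show "cmod (X$$(i,k) * X'$$(k,j)) \<le> Re (Z$$(i,k) * Z'$$(k,j))" .
    qed
    also have "\<dots> = Re ((Z*Z')$$(i,j))" unfolding zz by (simp add: Re_sum)
    finally show ?thesis using 1 by simp
  qed
  have dims: "dim_row X = dim_row Z" "dim_col X' = dim_col Z'" using d1 d2 unfolding dommat_def by simp_all
  show ?thesis unfolding dommat_def
  proof (intro conjI allI impI)
    show "dim_row (X*X') = dim_row (Z*Z')" using dims by simp
    show "dim_col (X*X') = dim_col (Z*Z')" using dims by simp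
    fix i j assume ij: "i < dim_row (X*X')" "j < dim_col (X*X')"
    then have "i < dim_row X" "j < dim_col X'" by simp_all
    from main[OF this] show "Im ((Z*Z')$$(i,j)) = 0" "cmod ((X*X')$$(i,j)) \<le> Re ((Z*Z')$$(i,j))" by simp_all
  qed
qed

lemma dommat_one: "dommat (1\<^sub>m n) (1\<^sub>m n)"
  unfolding dommat_def by simp

lemma dommat_pow:
  assumes d: "dommat X Z" and X: "X \<in> carrier_mat n n"
  shows "dommat (X ^\<^sub>m k) (Z ^\<^sub>m k)"
proof (induction k)
  case 0
  have "dim_row Z = n" using d X unfolding dommat_def carrier_mat_def by simp
  then show ?case using X dommat_one[of n] by simp
next
  case (Suc k)
  have "dommat (X ^\<^sub>m k * X) (Z ^\<^sub>m k * Z)"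
    by (rule dommat_mult[OF Suc d]) (use X in auto)
  then show ?case by simp
qed

lemma dommat_abs: "dommat X (abs_mat X)"
  unfolding dommat_def abs_mat_def by simp

lemma dommat_abs2: "dommat X Z \<Longrightarrow> dommat (abs_mat X) Z"
  unfolding dommat_def abs_mat_def by simp

lemma pow_smult_mat:
  fixes c :: complex
  assumes P: "P \<in> carrier_mat m m"
  shows "(c \<cdot>\<^sub>m P) ^\<^sub>m k = c ^ k \<cdot>\<^sub>m (P ^\<^sub>m k)"
proof (induction k)
  case 0
  then show ?case using P by (auto intro!: eq_matI)
next
  case (Suc k)
  have "(c \<cdot>\<^sub>m P) ^\<^sub>m Suc k = (c ^ k \<cdot>\<^sub>m (P ^\<^sub>m k)) * (c \<cdot>\<^sub>m P)" using Suc by simp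
  also have "\<dots> = c ^ Suc k \<cdot>\<^sub>m (P ^\<^sub>m Suc k)"
    using P by (intro eq_matI) (auto simp: scalar_prod_def sum_distrib_left mult_ac intro!: sum.cong)
  finally show ?case .
qed

lemma spectrum_empty0: assumes A: "A \<in> carrier_mat 0 0" shows "spectrum (A::complex mat) = {}"
proof -
  have z: "v = 0\<^sub>v 0" if "v \<in> carrier_vec 0" for v :: "complex vec"
    using that by (intro eq_vecI) auto
  have "\<not> eigenvector A v k" for v k
  proof
    assume "eigenvector A v k"
    then have "v \<in> carrier_vec 0" "v \<noteq> 0\<^sub>v 0" using A unfolding eigenvector_def by auto
    then show False using z by blast
  qed
  then show ?thesis unfolding spectrum_def eigenvalue_def by blast
qed

lemma spectral_radius_smult_le:
  assumes P: "P \<in> carrier_mat m m" and m: "m > 0" and t: "t > 0"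
  shows "spectral_radius (complex_of_real t \<cdot>\<^sub>m P) \<le> t * spectral_radius P"
proof -
  have T: "complex_of_real t \<cdot>\<^sub>m P \<in> carrier_mat m m" using P by auto
  from spectral_radius_mem_max(1)[OF T m] obtain mu where
    mu: "mu \<in> spectrum (complex_of_real t \<cdot>\<^sub>m P)" and eq: "spectral_radius (complex_of_real t \<cdot>\<^sub>m P) = cmod mu"
    by auto
  from mu obtain v where v: "eigenvector (complex_of_real t \<cdot>\<^sub>m P) v mu"
    unfolding spectrum_def eigenvalue_def by auto
  have "eigenvector P v (mu / complex_of_real t)"
  proof -
    have vc: "v \<in> carrier_vec m" and vn: "v \<noteq> 0\<^sub>v m" and ev: "(complex_of_real t \<cdot>\<^sub>m P) *\<^sub>v v = mu \<cdot>\<^sub>v v"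
      using v P unfolding eigenvector_def by auto
    have "P *\<^sub>v v = (mu / complex_of_real t) \<cdot>\<^sub>v v"
    proof (rule eq_vecI)
      fix i assume "i < dim_vec ((mu / complex_of_real t) \<cdot>\<^sub>v v)"
      then have i: "i < m" using vc by auto
      have "((complex_of_real t \<cdot>\<^sub>m P) *\<^sub>v v) $ i = (mu \<cdot>\<^sub>v v) $ i" using ev by simp
      then have "complex_of_real t * ((P *\<^sub>v v) $ i) = mu * v $ i"
        using i P vc by (simp add: scalar_prod_def sum_distrib_left algebra_simps)
      then show "(P *\<^sub>v v) $ i = ((mu / complex_of_real t) \<cdot>\<^sub>v v) $ i"
        using i vc t by (simp add: field_simps)
    qed (use vc P in auto)
    then show ?thesis using vc vn P unfolding eigenvector_def by auto
  qed
  then have "mu / complex_of_real t \<in> spectrum P" unfolding spectrum_def eigenvalue_def by auto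
  then have "cmod (mu / complex_of_real t) \<le> spectral_radius P"
    using spectral_radius_mem_max(2)[OF P m] by auto
  then have "cmod mu / t \<le> spectral_radius P" using t by (simp add: norm_divide)
  then show ?thesis using eq t by (simp add: field_simps)
qed


lemma block_pow:
  fixes U V :: "'a::comm_ring_1 mat"
  assumes U: "U \<in> carrier_mat n n" and V: "V \<in> carrier_mat n n"
  shows "four_block_mat (0\<^sub>m n n) U V (0\<^sub>m n n) ^\<^sub>m (2*k) =
         four_block_mat ((U*V) ^\<^sub>m k) (0\<^sub>m n n) (0\<^sub>m n n) ((V*U) ^\<^sub>m k)"
proof (induction k)
  case 0
  then show ?case using U V by (simp add: four_block_one_mat[symmetric] del: four_block_one_mat)
next
  case (Suc k)
  let ?P = "four_block_mat (0\<^sub>m n n) U V (0\<^sub>m n n)"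
  have UV: "U * V \<in> carrier_mat n n" "V * U \<in> carrier_mat n n" using U V by auto
  have "?P ^\<^sub>m (2 * Suc k) = ?P ^\<^sub>m (2*k) * ?P * ?P"
    by (simp add: mult_2)
  also have "\<dots> = four_block_mat ((U*V) ^\<^sub>m k) (0\<^sub>m n n) (0\<^sub>m n n) ((V*U) ^\<^sub>m k) * ?P * ?P"
    using Suc by simp
  also have "four_block_mat ((U*V) ^\<^sub>m k) (0\<^sub>m n n) (0\<^sub>m n n) ((V*U) ^\<^sub>m k) * ?P
      = four_block_mat (0\<^sub>m n n) ((U*V) ^\<^sub>m k * U) ((V*U) ^\<^sub>m k * V) (0\<^sub>m n n)"
    by (subst mult_four_block_mat[OF pow_carrier_mat[OF UV(1)] zero_carrier_mat zero_carrier_mat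
      pow_carrier_mat[OF UV(2)] zero_carrier_mat U V zero_carrier_mat]) (use U V UV in auto)
  also have "\<dots> * ?P = four_block_mat ((U*V) ^\<^sub>m k * U * V) (0\<^sub>m n n) (0\<^sub>m n n) ((V*U) ^\<^sub>m k * V * U)"
    by (subst mult_four_block_mat[OF zero_carrier_mat mult_carrier_mat[OF pow_carrier_mat[OF UV(1)] U]
       mult_carrier_mat[OF pow_carrier_mat[OF UV(2)] V] zero_carrier_mat zero_carrier_mat U V zero_carrier_mat])
       (use U V UV in auto)
  also have "\<dots> = four_block_mat ((U*V) ^\<^sub>m Suc k) (0\<^sub>m n n) (0\<^sub>m n n) ((V*U) ^\<^sub>m Suc k)"
    using assoc_mult_mat[OF pow_carrier_mat[OF UV(1)] U V] assoc_mult_mat[OF pow_carrier_mat[OF UV(2)] V U]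
    by simp
  finally show ?case .
qed

lemma key_identity:
  fixes A M F Mi Fi :: "complex mat"
  assumes A: "A \<in> carrier_mat n n"
    and M: "M \<in> carrier_mat n n" and F: "F \<in> carrier_mat n n"
    and Mi: "Mi \<in> carrier_mat n n" and Fi: "Fi \<in> carrier_mat n n"
    and M_inv: "M * Mi = 1\<^sub>m n"
    and F_inv: "Fi * F = 1\<^sub>m n"
  shows "1\<^sub>m n - Fi * (M + F - A) * Mi * A = (1\<^sub>m n - Fi * A) * (1\<^sub>m n - Mi * A)"
proof -
  have c: "Mi * A \<in> carrier_mat n n" "Fi * A \<in> carrier_mat n n" "Fi * A * (Mi * A) \<in> carrier_mat n n"
    "Fi * M \<in> carrier_mat n n" "M + F \<in> carrier_mat n n" "1\<^sub>m n - Fi * A \<in> carrier_mat n n"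
    using A M F Mi Fi by auto
  have FM: "Fi * M * Mi = Fi" using Fi M Mi M_inv by simp
  have FF: "Fi * F * Mi = Mi" using Fi F Mi F_inv by simp
  have "Fi * (M + F - A) = Fi * (M + F) - Fi * A" by (rule mult_minus_distrib_mat[OF Fi c(5) A])
  also have "Fi * (M + F) = Fi * M + Fi * F" by (rule mult_add_distrib_mat[OF Fi M F])
  finally have "Fi * (M + F - A) * Mi = (Fi * M + Fi * F - Fi * A) * Mi" by simp
  also have "\<dots> = (Fi * M + Fi * F) * Mi - Fi * A * Mi"
    by (rule minus_mult_distrib_mat[of _ n n]) (use c Fi F Mi in auto)
  also have "(Fi * M + Fi * F) * Mi = Fi * M * Mi + Fi * F * Mi"
    by (rule add_mult_distrib_mat[of _ n n]) (use c Fi F Mi in auto)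
  finally have "Fi * (M + F - A) * Mi * A = (Fi + Mi - Fi * A * Mi) * A" unfolding FM FF by simp
  also have "\<dots> = (Fi + Mi) * A - Fi * A * Mi * A"
    by (rule minus_mult_distrib_mat[of _ n n]) (use c Fi A Mi in auto)
  also have "(Fi + Mi) * A = Fi * A + Mi * A"
    by (rule add_mult_distrib_mat[of _ n n]) (use c Fi A Mi in auto)
  also have "Fi * A * Mi * A = Fi * A * (Mi * A)" by (rule assoc_mult_mat[of _ n n _ n _ n]) (use Fi A Mi in auto)
  finally have L: "1\<^sub>m n - Fi * (M + F - A) * Mi * A = 1\<^sub>m n - (Fi * A + Mi * A - Fi * A * (Mi * A))"
    by simp
  have R: "(1\<^sub>m n - Fi * A) * (1\<^sub>m n - Mi * A) = (1\<^sub>m n - Fi * A) - (Mi * A - Fi * A * (Mi * A))"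
  proof -
    have "(1\<^sub>m n - Fi * A) * (1\<^sub>m n - Mi * A) = (1\<^sub>m n - Fi * A) * 1\<^sub>m n - (1\<^sub>m n - Fi * A) * (Mi * A)"
      by (rule mult_minus_distrib_mat[of _ n n]) (use c in auto)
    also have "(1\<^sub>m n - Fi * A) * (Mi * A) = 1\<^sub>m n * (Mi * A) - Fi * A * (Mi * A)"
      by (rule minus_mult_distrib_mat[of _ n n]) (use c in auto)
    finally show ?thesis using right_mult_one_mat[OF c(6)] left_mult_one_mat[OF c(1)] by simp
  qed
  show ?thesis unfolding L R using c A Fi Mi by (intro eq_matI) auto
qed


theorem proposition1:
  fixes A M F Mi Fi :: "complex mat" and n :: nat
  assumes A: "A \<in> carrier_mat n n"
    and M: "M \<in> carrier_mat n n" and F: "F \<in> carrier_mat n n"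
    and Mi: "Mi \<in> carrier_mat n n" and Fi: "Fi \<in> carrier_mat n n"
    and M_inv: "M * Mi = 1\<^sub>m n" "Mi * M = 1\<^sub>m n"
    and F_inv: "F * Fi = 1\<^sub>m n" "Fi * F = 1\<^sub>m n"
    and rho_Q: "spectral_radius (abs_mat (four_block_mat (0\<^sub>m n n) (1\<^sub>m n - Mi * A)
                                                   (1\<^sub>m n - Fi * A) (0\<^sub>m n n))) < 1"
  shows "spectral_radius (abs_mat (1\<^sub>m n - Fi * (M + F - A) * Mi * A)) < 1"
proof (cases "n = 0")
  case True
  have "spectral_radius (abs_mat (1\<^sub>m n - Fi * (M + F - A) * Mi * A))
      = spectral_radius (abs_mat (four_block_mat (0\<^sub>m n n) (1\<^sub>m n - Mi * A)
                                                   (1\<^sub>m n - Fi * A) (0\<^sub>m n n)))"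
    unfolding spectral_radius_def
    by (subst (1 2) spectrum_empty0) (use True A M F Mi Fi in \<open>auto simp: abs_mat_def\<close>)
  then show ?thesis using rho_Q by simp
next
  case False
  then have n: "n > 0" by simp
  define B where "B = 1\<^sub>m n - Mi * A"
  define C where "C = 1\<^sub>m n - Fi * A"
  have Bc: "B \<in> carrier_mat n n" and Cc: "C \<in> carrier_mat n n" unfolding B_def C_def using A Mi Fi by auto
  define aB where "aB = abs_mat B"
  define aC where "aC = abs_mat C"
  have aBc: "aB \<in> carrier_mat n n" and aCc: "aC \<in> carrier_mat n n"
    unfolding aB_def aC_def abs_mat_def using Bc Cc by auto
  define P where "P = four_block_mat (0\<^sub>m n n) aB aC (0\<^sub>m n n)"
  have Pc: "P \<in> carrier_mat (n+n) (n+n)" unfolding P_def using aBc aCc by auto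
  have P_eq: "abs_mat (four_block_mat (0\<^sub>m n n) B C (0\<^sub>m n n)) = P"
    unfolding P_def aB_def aC_def abs_mat_def using Bc Cc by (intro eq_matI) auto
  define r where "r = spectral_radius P"
  have r1: "r < 1" using rho_Q P_eq unfolding r_def B_def C_def by simp
  have n2: "n + n > 0" using n by simp
  have r0: "r \<ge> 0" using spectral_radius_mem_max(1)[OF Pc n2] unfolding r_def by auto
  define t where "t = 2 / (1 + r)"
  have t1: "t > 1" and tr: "t * r < 1" using r0 r1 unfolding t_def by (auto simp: field_simps)
  define T where "T = complex_of_real t \<cdot>\<^sub>m P"
  have Tc: "T \<in> carrier_mat (n+n) (n+n)" unfolding T_def using Pc by auto
  have "spectral_radius T \<le> t * r" unfolding T_def r_def
    by (rule spectral_radius_smult_le[OF Pc n2]) (use t1 in auto)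
  then have rT: "spectral_radius T < 1" using tr by simp
  obtain c where cb: "\<And>k. norm_bound (T ^\<^sub>m k) c"
    using spectral_radius_jnf_norm_bound_less_1_upper_triangular[OF Tc rT] by auto
  define G where "G = aC * aB"
  have Gc: "G \<in> carrier_mat n n" unfolding G_def using aBc aCc by auto
  have Gb: "t ^ (2*k) * cmod ((G ^\<^sub>m k) $$ (i,j)) \<le> c" if i: "i < n" and j: "j < n" for k i j
  proof -
    have "T ^\<^sub>m (2*k) = complex_of_real t ^ (2*k) \<cdot>\<^sub>m (P ^\<^sub>m (2*k))"
      unfolding T_def by (rule pow_smult_mat[OF Pc])
    also have "P ^\<^sub>m (2*k) = four_block_mat ((aB*aC) ^\<^sub>m k) (0\<^sub>m n n) (0\<^sub>m n n) (G ^\<^sub>m k)"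
      unfolding P_def G_def by (rule block_pow[OF aBc aCc])
    finally have eq: "(T ^\<^sub>m (2*k)) $$ (n+i, n+j) = complex_of_real t ^ (2*k) * (G ^\<^sub>m k) $$ (i,j)"
      using i j aBc aCc Gc by simp
    have "cmod ((T ^\<^sub>m (2*k)) $$ (n+i, n+j)) \<le> c"
      using cb[of "2*k"] i j Tc unfolding norm_bound_def by auto
    then show ?thesis unfolding eq using t1 by (simp add: norm_mult norm_power)
  qed
  define Y where "Y = abs_mat (C * B)"
  have Yc: "Y \<in> carrier_mat n n" unfolding Y_def abs_mat_def using Bc Cc by auto
  have dY: "dommat Y G" unfolding Y_def G_def aC_def aB_def
    by (rule dommat_abs2, rule dommat_mult[OF dommat_abs dommat_abs]) (use Bc Cc in auto)
  have eqY: "abs_mat (1\<^sub>m n - Fi * (M + F - A) * Mi * A) = Y"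
    unfolding Y_def B_def C_def using key_identity[OF A M F Mi Fi M_inv(1) F_inv(2)] by simp
  show ?thesis unfolding eqY
  proof (rule ccontr)
    assume "\<not> spectral_radius Y < 1"
    then have rY: "spectral_radius Y \<ge> 1" by simp
    from spectral_radius_mem_max(1)[OF Yc n] obtain lam where
      lam: "lam \<in> spectrum Y" and lamr: "spectral_radius Y = cmod lam" by blast
    from lam have "eigenvalue Y lam" unfolding spectrum_def by simp
    then obtain v where ev: "eigenvector Y v lam" unfolding eigenvalue_def by blast
    have dimY: "dim_row Y = n" using Yc by simp
    have vc: "v \<in> carrier_vec n" and vn: "v \<noteq> 0\<^sub>v n" using ev unfolding eigenvector_def dimY by simp_all
    obtain i0 where i0: "i0 < n" and vi0: "v $ i0 \<noteq> 0"
    proof -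
      have "\<exists>i<n. v $ i \<noteq> 0"
      proof (rule ccontr)
        assume "\<not> (\<exists>i<n. v $ i \<noteq> 0)"
        then have "v = 0\<^sub>v n" using vc by (intro eq_vecI) auto
        then show False using vn by simp
      qed
      then show ?thesis using that by auto
    qed
    define S where "S = (\<Sum>j<n. cmod (v $ j))"
    have bound: "t ^ (2*k) * cmod (v $ i0) \<le> c * S" for k
    proof -
      have pw: "Y ^\<^sub>m k *\<^sub>v v = lam ^ k \<cdot>\<^sub>v v" by (rule eigenvector_pow[OF Yc ev])
      have dk: "dommat (Y ^\<^sub>m k) (G ^\<^sub>m k)" by (rule dommat_pow[OF dY Yc])
      have "cmod (v $ i0) \<le> cmod lam ^ k * cmod (v $ i0)"
      proof -
        have "1 \<le> cmod lam ^ k" using rY lamr by (simp add: one_le_power)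
        then show ?thesis using mult_right_mono[of 1 "cmod lam ^ k" "cmod (v $ i0)"] by simp
      qed
      also have "\<dots> = cmod ((Y ^\<^sub>m k *\<^sub>v v) $ i0)"
        unfolding pw using i0 vc by (simp add: norm_mult norm_power)
      also have "(Y ^\<^sub>m k *\<^sub>v v) $ i0 = (\<Sum>j<n. (Y ^\<^sub>m k) $$ (i0,j) * v $ j)"
        using i0 vc Yc by (simp add: scalar_prod_def atLeast0LessThan)
      also have "cmod \<dots> \<le> (\<Sum>j<n. cmod ((Y ^\<^sub>m k) $$ (i0,j)) * cmod (v $ j))"
        by (rule order_trans[OF norm_sum], rule sum_mono, simp add: norm_mult)
      also have "\<dots> \<le> (\<Sum>j<n. cmod ((G ^\<^sub>m k) $$ (i0,j)) * cmod (v $ j))"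
      proof (intro sum_mono mult_right_mono)
        fix j assume "j \<in> {..<n}"
        then have "j < n" by simp
        then have "cmod ((Y ^\<^sub>m k) $$ (i0,j)) \<le> Re ((G ^\<^sub>m k) $$ (i0,j))"
        proof -
          from dk have "\<forall>i<dim_row (Y ^\<^sub>m k). \<forall>j<dim_col (Y ^\<^sub>m k).
              Im ((G ^\<^sub>m k) $$ (i,j)) = 0 \<and> cmod ((Y ^\<^sub>m k) $$ (i,j)) \<le> Re ((G ^\<^sub>m k) $$ (i,j))"
            unfolding dommat_def by blast
          moreover have "dim_row (Y ^\<^sub>m k) = n" "dim_col (Y ^\<^sub>m k) = n" using Yc by simp_all
          ultimately show ?thesis using i0 \<open>j < n\<close> by simp
        qed
        then show "cmod ((Y ^\<^sub>m k) $$ (i0,j)) \<le> cmod ((G ^\<^sub>m k) $$ (i0,j))"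
          by (rule order_trans[OF _ complex_Re_le_cmod])
      qed simp
      finally have le1: "cmod (v $ i0) \<le> (\<Sum>j<n. cmod ((G ^\<^sub>m k) $$ (i0,j)) * cmod (v $ j))" .
      have tp: "t ^ (2*k) > 0" using t1 by simp
      have "t ^ (2*k) * cmod (v $ i0) \<le> t ^ (2*k) * (\<Sum>j<n. cmod ((G ^\<^sub>m k) $$ (i0,j)) * cmod (v $ j))"
        using le1 tp by simp
      also have "\<dots> = (\<Sum>j<n. (t ^ (2*k) * cmod ((G ^\<^sub>m k) $$ (i0,j))) * cmod (v $ j))"
        by (simp add: sum_distrib_left mult.assoc)
      also have "\<dots> \<le> (\<Sum>j<n. c * cmod (v $ j))"
      proof (intro sum_mono mult_right_mono)
        fix j assume "j \<in> {..<n}"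
        then have "j < n" by simp
        then show "t ^ (2*k) * cmod ((G ^\<^sub>m k) $$ (i0,j)) \<le> c" by (rule Gb[OF i0])
      qed simp
      also have "\<dots> = c * S" unfolding S_def by (simp add: sum_distrib_left)
      finally show ?thesis .
    qed
    have t2: "1 < t ^ 2" using t1 by (simp add: one_less_power)
    obtain k where k: "c * S / cmod (v $ i0) < (t ^ 2) ^ k" using real_arch_pow[OF t2] by auto
    have vp: "cmod (v $ i0) > 0" using vi0 by simp
    from k vp have "c * S < (t ^ 2) ^ k * cmod (v $ i0)" by (simp add: field_simps)
    also have "\<dots> = t ^ (2*k) * cmod (v $ i0)" by (simp add: power_mult)
    finally show False using bound[of k] by simp
  qed
qed

end
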